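(* Let $\mathcal X_{aux}\subset\mathbb R^n$ be a set divided into distinct semantic groups $\mathcal X_{aux}=\mathcal X^{y_1}\cup\cdots\cup\mathcal X^{y_m}$, where each group $\mathcal X^{y_i}$ consists of the points with semantic label $y_i$, and at least two groups with different labels are nonempty. Suppose the following semantic-change assumption holds: there exists $\zeta>0$ such that for any $x_i\in\mathcal X^{y_i}$, $x_j\in\mathcal X^{y_j}$ with $y_i\neq y_j$ and any $\lambda$ with $\zeta<\lambda<1-\zeta$, the point $\hat x=\lambda x_i+(1-\lambda)x_j$ belongs to neither $\mathcal X^{y_i}$ nor $\mathcal X^{y_j}$. Define $$\mathcal G\mathcal X_{aux}=\{\hat x\mid \hat x=\lambda x_1+(1-\lambda)x_2,\ x_1,x_2\in\mathcal X_{aux},\ \lambda\in[0,1]\}.$$ Then $\mathcal X_{aux}\subset\mathcal G\mathcal X_{aux}$ (proper inclusion).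
   Context: $\mathcal X_{aux}$ is the input space of auxiliary outliers used for OOD detection training; $\mathcal G\mathcal X_{aux}$ is the space obtained by applying all mixup transforms (all pairs of points and all interpolation weights $\lambda\in[0,1]$) to it. Semantic labels of points partition $\mathcal X_{aux}$ into the groups $\mathcal X^{y_i}$. *)

theory Defs
  imports "HOL-Analysis.Analysis"
begin

definition sem_group :: "('a \<Rightarrow> 'l) \<Rightarrow> 'a set \<Rightarrow> 'l \<Rightarrow> 'a set" where
  "sem_group lab X y = {x \<in> X. lab x = y}"

definition mixup_space :: "('a::real_vector) set \<Rightarrow> 'a set" where
  "mixup_space X = {lam *\<^sub>R x1 + (1 - lam) *\<^sub>R x2 | x1 x2 lam.
                      x1 \<in> X \<and> x2 \<in> X \<and> lam \<in> {0..1}}"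

end

theory Submission
  imports Defs
begin

lemma mono_contra:
  fixes g :: "real \<Rightarrow> 'l" and z :: real
  assumes z: "0 < z" "z < 1/2"
    and H: "\<And>s t lam. s \<in> {0..1} \<Longrightarrow> t \<in> {0..1} \<Longrightarrow> g s \<noteq> g t \<Longrightarrow> z < lam \<Longrightarrow> lam < 1 - z
         \<Longrightarrow> g (lam * s + (1 - lam) * t) \<noteq> g s \<and> g (lam * s + (1 - lam) * t) \<noteq> g t"
    and a: "0 \<le> a" "a < lo" "lo < m" "m \<le> 1" "g a \<noteq> g m"
    and mono: "\<And>s. lo < s \<Longrightarrow> s \<le> m \<Longrightarrow> g s = g m"
  shows False
proof -
  define N where "N = {s \<in> {a..m}. g s \<noteq> g m}"
  have aN: "a \<in> N" using a by (auto simp: N_def)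
  have bdd: "bdd_above N" unfolding N_def by (rule bdd_aboveI[of _ m]) auto
  have Nlo: "\<And>s. s \<in> N \<Longrightarrow> s \<le> lo" using mono unfolding N_def by force
  define x0 where "x0 = Sup N"
  have x0lo: "x0 \<le> lo" unfolding x0_def using aN Nlo by (intro cSup_least) auto
  define e where "e = z * (m - lo)"
  have e: "e > 0" using z a by (simp add: e_def)
  have "x0 - e < Sup N" using e x0_def by simp
  then obtain x where xN: "x \<in> N" and xgt: "x0 - e < x"
    using less_cSup_iff[of N "x0 - e"] aN bdd by blast
  have xle: "x \<le> x0" unfolding x0_def using xN bdd by (rule cSup_upper)
  have xm: "x \<in> {0..1}" "g x \<noteq> g m" "x \<le> m" using xN a by (auto simp: N_def)
  define y where "y = (1/2) * x + (1 - 1/2) * m"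
  have "g y \<noteq> g m" using H[of x m "1/2"] xm a z unfolding y_def by auto
  have mx: "m - x \<ge> m - lo" using xle x0lo by simp
  have "z * (m - lo) \<le> z * (m - x)" using mx z by (intro mult_left_mono) auto
  moreover have "0 < (m - x) * (1 - 2*z)" using z mx a by (intro mult_pos_pos) auto
  hence "z * (m - x) < (m - x)/2" by (simp add: field_simps)
  ultimately have ygt: "y > x0" using xgt unfolding y_def e_def by (simp add: field_simps)
  have "y \<in> N" using \<open>g y \<noteq> g m\<close> xm a unfolding N_def y_def using xN N_def by auto
  hence "y \<le> x0" unfolding x0_def using bdd by (rule cSup_upper)
  thus False using ygt by simp
qed

lemma line_lemma:
  fixes g :: "real \<Rightarrow> 'l" and z :: real
  assumes fin: "finite (g ` {0..1})" and z: "0 < z" "z < 1/2"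
    and H: "\<And>s t lam. s \<in> {0..1} \<Longrightarrow> t \<in> {0..1} \<Longrightarrow> g s \<noteq> g t \<Longrightarrow> z < lam \<Longrightarrow> lam < 1 - z
         \<Longrightarrow> g (lam * s + (1 - lam) * t) \<noteq> g s \<and> g (lam * s + (1 - lam) * t) \<noteq> g t"
  shows "0 \<le> a \<Longrightarrow> a < b \<Longrightarrow> b \<le> 1 \<Longrightarrow> g a \<noteq> g b \<Longrightarrow> False"
proof (induction "card (g ` {a..b})" arbitrary: a b rule: less_induct)
  case less
  define lo where "lo = a + z*(b-a)"
  define hi where "hi = b - z*(b-a)"
  define m where "m = (a+b)/2"
  have pz: "0 < (b - a) * (1 - 2*z)" using z less.prems by (intro mult_pos_pos) auto
  have lohi: "lo < m" "m < hi" "a < lo"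
    using z less.prems pz by (auto simp: lo_def hi_def m_def field_simps)
  have win: "g s \<noteq> g a \<and> g s \<noteq> g b" if s: "lo < s" "s < hi" for s
  proof -
    define lam where "lam = (b - s)/(b - a)"
    have "z < lam" "lam < 1 - z" using s less.prems
      by (auto simp: lam_def lo_def hi_def field_simps)
    moreover have "lam * (b - a) = b - s" using less.prems by (simp add: lam_def)
    hence "lam * a + (1 - lam) * b = s" by (simp add: algebra_simps)
    ultimately show ?thesis using H[of a b lam] less.prems by auto
  qed
  show False
  proof (cases "\<exists>p q. lo < p \<and> p < q \<and> q < hi \<and> g p \<noteq> g q")
    case True
    then obtain p q where pq: "lo < p" "p < q" "q < hi" "g p \<noteq> g q" by blast
    have sub: "g ` {p..q} \<subseteq> g ` {a..b} - {g a}"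
    proof
      fix c assume "c \<in> g ` {p..q}"
      then obtain s where "s \<in> {p..q}" "c = g s" by blast
      moreover have "a \<le> lo" "hi \<le> b" using lohi z less.prems by (auto simp: hi_def m_def)
      ultimately show "c \<in> g ` {a..b} - {g a}" using win[of s] pq by auto
    qed
    have "finite (g ` {a..b})"
      by (rule finite_subset[OF _ fin]) (use less.prems in auto)
    moreover have "g a \<in> g ` {a..b}" using less.prems by auto
    ultimately have cd: "card (g ` {p..q}) < card (g ` {a..b})"
      using sub by (intro psubset_card_mono) blast+
    have zb: "0 \<le> z * (b - a)" using z less.prems by simp
    moreover have "0 \<le> p" "q \<le> 1" using pq lohi less.prems zb by (auto simp: hi_def)
    ultimately show False using less.hyps[of p q] pq cd by auto
  next
    case False
    have mono: "g s = g m" if "lo < s" "s \<le> m" for s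
      using False that lohi by (cases "s = m") auto
    have "g a \<noteq> g m" using win[of m] lohi by auto
    show False
      by (rule mono_contra[OF z H _ lohi(3) lohi(1) _ \<open>g a \<noteq> g m\<close> mono])
         (use less.prems in \<open>auto simp: m_def\<close>)
  qed
qed

theorem lemma1:
  fixes X :: "(real ^ 'n) set" and lab :: "real ^ 'n \<Rightarrow> 'l"
  assumes finite_labels: "finite (lab ` X)"
    and two_groups: "\<exists>x1\<in>X. \<exists>x2\<in>X. lab x1 \<noteq> lab x2"
    and semantic_change: "\<exists>\<zeta>::real. 0 < \<zeta> \<and> \<zeta> < 1/2 \<and>
       (\<forall>xi\<in>X. \<forall>xj\<in>X. lab xi \<noteq> lab xj \<longrightarrow>
          (\<forall>lam::real. \<zeta> < lam \<and> lam < 1 - \<zeta> \<longrightarrow>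
             lam *\<^sub>R xi + (1 - lam) *\<^sub>R xj \<notin> sem_group lab X (lab xi) \<and>
             lam *\<^sub>R xi + (1 - lam) *\<^sub>R xj \<notin> sem_group lab X (lab xj)))"
  shows "X \<subset> mixup_space X"
proof -
  have sub: "X \<subseteq> mixup_space X"
  proof
    fix x assume "x \<in> X"
    show "x \<in> mixup_space X"
    proof -
      have "x = 1 *\<^sub>R x + (1 - 1) *\<^sub>R x" by simp
      thus ?thesis using \<open>x \<in> X\<close> unfolding mixup_space_def by fastforce
    qed
  qed
  have "X \<noteq> mixup_space X"
  proof
    assume eq: "X = mixup_space X"
    obtain x1 x2 where x12: "x1 \<in> X" "x2 \<in> X" "lab x1 \<noteq> lab x2" using two_groups by blast
    obtain z where z: "0 < z" "z < 1/2" and SC: "\<forall>xi\<in>X. \<forall>xj\<in>X. lab xi \<noteq> lab xj \<longrightarrow>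
          (\<forall>lam::real. z < lam \<and> lam < 1 - z \<longrightarrow>
             lam *\<^sub>R xi + (1 - lam) *\<^sub>R xj \<notin> sem_group lab X (lab xi) \<and>
             lam *\<^sub>R xi + (1 - lam) *\<^sub>R xj \<notin> sem_group lab X (lab xj))"
      using semantic_change by blast
    define \<gamma> where "\<gamma> s = s *\<^sub>R x1 + (1 - s) *\<^sub>R x2" for s :: real
    define g where "g s = lab (\<gamma> s)" for s
    have inX: "\<gamma> s \<in> X" if "s \<in> {0..1}" for s
    proof -
      have "\<gamma> s \<in> mixup_space X" unfolding mixup_space_def \<gamma>_def using that x12 by blast
      thus ?thesis using eq by simp
    qed
    have fin: "finite (g ` {0..1})"
      by (rule finite_subset[OF _ finite_labels]) (auto simp: g_def intro: inX)
    have lin: "\<gamma> (lam * s + (1 - lam) * t) = lam *\<^sub>R \<gamma> s + (1 - lam) *\<^sub>R \<gamma> t" for lam s t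
      unfolding \<gamma>_def by (simp add: algebra_simps scaleR_add_right scaleR_diff_right)
    have H: "g (lam * s + (1 - lam) * t) \<noteq> g s \<and> g (lam * s + (1 - lam) * t) \<noteq> g t"
      if "s \<in> {0..1}" "t \<in> {0..1}" "g s \<noteq> g t" "z < lam" "lam < 1 - z" for s t lam
    proof -
      have "lam * s + (1 - lam) * t \<in> {0..1}"
      proof -
        have "0 \<le> lam * s + (1 - lam) * t" using that z by (auto intro!: add_nonneg_nonneg mult_nonneg_nonneg)
        moreover have "lam * s + (1 - lam) * t \<le> lam*1+(1-lam)*1" using that z
          by (intro add_mono mult_left_mono) auto
        ultimately show ?thesis by simp
      qed
      hence "lam *\<^sub>R \<gamma> s + (1 - lam) *\<^sub>R \<gamma> t \<in> X" using inX lin by metis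
      moreover have "lam *\<^sub>R \<gamma> s + (1 - lam) *\<^sub>R \<gamma> t \<notin> sem_group lab X (lab (\<gamma> s)) \<and>
             lam *\<^sub>R \<gamma> s + (1 - lam) *\<^sub>R \<gamma> t \<notin> sem_group lab X (lab (\<gamma> t))"
        using SC inX[OF that(1)] inX[OF that(2)] that by (auto simp: g_def)
      ultimately show ?thesis by (auto simp: g_def lin sem_group_def)
    qed
    have "g 0 \<noteq> g 1" using x12 by (simp add: g_def \<gamma>_def)
    show False using line_lemma[OF fin z H, of 0 1] \<open>g 0 \<noteq> g 1\<close> by auto
  qed
  with sub show ?thesis by auto
qed

end
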